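(* Let $k$ be a field and $(A,(I_i^\pm)_{i=1,\ldots,n})$ a good $n$-fold cubical algebra over $k$. Put $A':=I_1^0$ and $J_{i-1}^\pm:=I_i^\pm\cap I_1^0$ for $i=2,\ldots,n$. (1) Then $(A',(J_i^\pm)_{i=1,\ldots,n-1})$ is a good $(n-1)$-fold cubical algebra, and $A'$ and $A$ have the same trace-class operators. (2) The natural homomorphism $I_{tr}/[I_{tr},I_{tr}]\to I_{tr}/[I_{tr},A]$ is an isomorphism.
   Context: Algebras are associative but not necessarily unital; algebra morphisms need not preserve units. A Beilinson $n$-fold cubical algebra over $k$ is an associative $k$-algebra $A$ together with two-sided ideals $I_i^+,I_i^-$ ($i=1,\ldots,n$) such that $I_i^++I_i^-=A$ for each $i$; one sets $I_i^0:=I_i^+\cap I_i^-$ and $I_{tr}:=\bigcap_{i=1}^nI_i^0$ (the trace-class operators). An algebra $B$ is locally left (resp. right) unital if for every finite subset $S\subseteq B$ there is $e_S\in B$ with $e_Sa=a$ (resp. $ae_S=a$) for all $a\in S$; locally bi-unital if both hold. The cubical algebra is good if for every $c=1,\ldots,n$ the intersection $I_1^0\cap\cdots\cap I_c^0$ is locally bi-unital. $[X,Y]$ denotes the $k$-span of commutators $xy-yx$. *)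

theory Defs
  imports Complex_Main
begin

(* An associative, not necessarily unital k-algebra structure on the ambient ring type 'a,
   with scalar multiplication sc by the field 'k. *)
definition kalg :: "('k::field \<Rightarrow> 'a::ring \<Rightarrow> 'a) \<Rightarrow> bool" where
  "kalg sc \<longleftrightarrow> module sc \<and>
     (\<forall>c x y. sc c (x * y) = sc c x * y \<and> sc c (x * y) = x * sc c y)"

definition subalg :: "('k::field \<Rightarrow> 'a::ring \<Rightarrow> 'a) \<Rightarrow> 'a set \<Rightarrow> bool" where
  "subalg sc A \<longleftrightarrow> module.subspace sc A \<and> (\<forall>x\<in>A. \<forall>y\<in>A. x * y \<in> A)"

definition ideal2 :: "('k::field \<Rightarrow> 'a::ring \<Rightarrow> 'a) \<Rightarrow> 'a set \<Rightarrow> 'a set \<Rightarrow> bool" where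
  "ideal2 sc A I \<longleftrightarrow> module.subspace sc I \<and> I \<subseteq> A \<and>
     (\<forall>a\<in>A. \<forall>x\<in>I. a * x \<in> I \<and> x * a \<in> I)"

definition setsum :: "'a::plus set \<Rightarrow> 'a set \<Rightarrow> 'a set" where
  "setsum X Y = {x + y | x y. x \<in> X \<and> y \<in> Y}"

definition cubical :: "('k::field \<Rightarrow> 'a::ring \<Rightarrow> 'a) \<Rightarrow> 'a set \<Rightarrow> (nat \<Rightarrow> 'a set) \<Rightarrow> (nat \<Rightarrow> 'a set) \<Rightarrow> nat \<Rightarrow> bool" where
  "cubical sc A Ipl Imi n \<longleftrightarrow> subalg sc A \<and>
     (\<forall>i\<in>{1..n}. ideal2 sc A (Ipl i) \<and> ideal2 sc A (Imi i) \<and> setsum (Ipl i) (Imi i) = A)"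

definition I0 :: "(nat \<Rightarrow> 'a set) \<Rightarrow> (nat \<Rightarrow> 'a set) \<Rightarrow> nat \<Rightarrow> 'a set" where
  "I0 Ipl Imi i = Ipl i \<inter> Imi i"

(* trace-class operators: intersection of I_i^0, i=1..n (equals A when n = 0) *)
definition Itr :: "'a set \<Rightarrow> (nat \<Rightarrow> 'a set) \<Rightarrow> (nat \<Rightarrow> 'a set) \<Rightarrow> nat \<Rightarrow> 'a set" where
  "Itr A Ipl Imi n = A \<inter> (\<Inter>i\<in>{1..n}. I0 Ipl Imi i)"

definition loc_left_unital :: "'a::times set \<Rightarrow> bool" where
  "loc_left_unital B \<longleftrightarrow> (\<forall>S. finite S \<and> S \<subseteq> B \<longrightarrow> (\<exists>e\<in>B. \<forall>a\<in>S. e * a = a))"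

definition loc_right_unital :: "'a::times set \<Rightarrow> bool" where
  "loc_right_unital B \<longleftrightarrow> (\<forall>S. finite S \<and> S \<subseteq> B \<longrightarrow> (\<exists>e\<in>B. \<forall>a\<in>S. a * e = a))"

definition loc_biunital :: "'a::times set \<Rightarrow> bool" where
  "loc_biunital B \<longleftrightarrow> loc_left_unital B \<and> loc_right_unital B"

definition good_cubical :: "('k::field \<Rightarrow> 'a::ring \<Rightarrow> 'a) \<Rightarrow> 'a set \<Rightarrow> (nat \<Rightarrow> 'a set) \<Rightarrow> (nat \<Rightarrow> 'a set) \<Rightarrow> nat \<Rightarrow> bool" where
  "good_cubical sc A Ipl Imi n \<longleftrightarrow> cubical sc A Ipl Imi n \<and>
     (\<forall>c\<in>{1..n}. loc_biunital (\<Inter>i\<in>{1..c}. I0 Ipl Imi i))"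

definition comm_span :: "('k::field \<Rightarrow> 'a::ring \<Rightarrow> 'a) \<Rightarrow> 'a set \<Rightarrow> 'a set \<Rightarrow> 'a set" where
  "comm_span sc X Y = module.span sc {x * y - y * x | x y. x \<in> X \<and> y \<in> Y}"

definition quot :: "'a::plus set \<Rightarrow> 'a set \<Rightarrow> 'a set set" where
  "quot X N = {{x + m | m. m \<in> N} | x. x \<in> X}"

(* natural map X/N1 -> X/N2 (for N1 \<subseteq> N2): the coset C goes to C + N2 *)
definition nat_map :: "'a::plus set \<Rightarrow> 'a set \<Rightarrow> 'a set" where
  "nat_map N2 C = setsum C N2"

end

theory Submission
  imports Defs
begin

lemma setsum_coset_self:
  fixes sc :: "'k::field \<Rightarrow> 'a::ring \<Rightarrow> 'a"
  assumes M: "module sc" and N: "module.subspace sc N" and C: "C \<in> quot X N"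
  shows "setsum C N = C"
proof -
  interpret M: module sc by (rule M)
  obtain x where x: "C = {x + m | m. m \<in> N}" using C unfolding quot_def by auto
  show ?thesis
  proof
    show "setsum C N \<subseteq> C"
    proof
      fix z assume "z \<in> setsum C N"
      then obtain m m' where "m \<in> N" "m' \<in> N" "z = (x + m) + m'"
        unfolding setsum_def x by auto
      then show "z \<in> C" unfolding x using M.subspace_add[OF N]
        by (auto intro!: exI[of _ "m + m'"] simp: add.assoc)
    qed
    show "C \<subseteq> setsum C N"
    proof
      fix z assume "z \<in> C"
      moreover have "z = z + 0" by simp
      ultimately show "z \<in> setsum C N" unfolding setsum_def
        using M.subspace_0[OF N] by blast
    qed
  qed
qed

theorem mainTheorem9:
  fixes sc :: "'k::field \<Rightarrow> 'a::ring \<Rightarrow> 'a"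
    and A :: "'a set" and Ipl Imi :: "nat \<Rightarrow> 'a set" and n :: nat
  assumes alg: "kalg sc"
    and n1: "n \<ge> 1"
    and good: "good_cubical sc A Ipl Imi n"
  defines "A' \<equiv> I0 Ipl Imi 1"
    and "Jp \<equiv> (\<lambda>j. Ipl (j + 1) \<inter> I0 Ipl Imi 1)"
    and "Jm \<equiv> (\<lambda>j. Imi (j + 1) \<inter> I0 Ipl Imi 1)"
  shows "good_cubical sc A' Jp Jm (n - 1)
       \<and> Itr A' Jp Jm (n - 1) = Itr A Ipl Imi n
       \<and> bij_betw (nat_map (comm_span sc (Itr A Ipl Imi n) A))
            (quot (Itr A Ipl Imi n) (comm_span sc (Itr A Ipl Imi n) (Itr A Ipl Imi n)))
            (quot (Itr A Ipl Imi n) (comm_span sc (Itr A Ipl Imi n) A))"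
proof -
  have Mod: "module sc" using alg kalg_def by auto
  interpret M: module sc by (rule Mod)
  have cub: "cubical sc A Ipl Imi n" and loc: "\<And>c. c \<in> {1..n} \<Longrightarrow> loc_biunital (\<Inter>i\<in>{1..c}. I0 Ipl Imi i)"
    using good unfolding good_cubical_def by auto
  have subA: "subalg sc A" using cub unfolding cubical_def by auto
  have idp: "\<And>i. i \<in> {1..n} \<Longrightarrow> ideal2 sc A (Ipl i)"
    and idm: "\<And>i. i \<in> {1..n} \<Longrightarrow> ideal2 sc A (Imi i)"
    and ss: "\<And>i. i \<in> {1..n} \<Longrightarrow> setsum (Ipl i) (Imi i) = A"
    using cub unfolding cubical_def by auto
  have i1: "1 \<in> {1..n}" using n1 by auto
  have I01: "ideal2 sc A (I0 Ipl Imi 1)" using idp[OF i1] idm[OF i1]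
    unfolding ideal2_def I0_def by (auto intro: M.subspace_inter)
  have I0i: "ideal2 sc A (I0 Ipl Imi i)" if "i \<in> {1..n}" for i using idp[OF that] idm[OF that]
    unfolding ideal2_def I0_def by (auto intro: M.subspace_inter)
  have A'sub: "A' \<subseteq> A" using I01 unfolding A'_def ideal2_def by auto
  have cub': "cubical sc A' Jp Jm (n - 1)"
    unfolding cubical_def
  proof (intro conjI ballI)
    show "subalg sc A'" using I01 A'sub unfolding subalg_def A'_def ideal2_def by blast
  next
    fix i assume i: "i \<in> {1..n-1}"
    then have i': "i + 1 \<in> {1..n}" by auto
    show "ideal2 sc A' (Jp i)" using idp[OF i'] I01 A'sub unfolding ideal2_def Jp_def A'_def
      by (auto intro: M.subspace_inter)
    show "ideal2 sc A' (Jm i)" using idm[OF i'] I01 A'sub unfolding ideal2_def Jm_def A'_def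
      by (auto intro: M.subspace_inter)
    show "setsum (Jp i) (Jm i) = A'"
    proof
      show "setsum (Jp i) (Jm i) \<subseteq> A'"
        using I01 unfolding setsum_def Jp_def Jm_def A'_def ideal2_def
        by (auto intro: M.subspace_add)
      show "A' \<subseteq> setsum (Jp i) (Jm i)"
      proof
        fix a assume a: "a \<in> A'"
        have "loc_biunital (\<Inter>i\<in>{1..1}. I0 Ipl Imi i)" using loc i1 by blast
        then have "loc_left_unital A'" unfolding A'_def loc_biunital_def by simp
        then obtain e where e: "e \<in> A'" "e * a = a" unfolding loc_left_unital_def
          using a by (metis empty_subsetI finite.emptyI finite.insertI insert_iff insert_subset)
        have "e \<in> A" using e A'sub by auto
        then obtain p m where pm: "p \<in> Ipl (i+1)" "m \<in> Imi (i+1)" "e = p + m"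
          using ss[OF i'] unfolding setsum_def by blast
        have aA: "a \<in> A" using a A'sub by auto
        have pA: "p \<in> A" "m \<in> A" using pm idp[OF i'] idm[OF i'] unfolding ideal2_def by auto
        have "p * a \<in> Jp i" using pm pA aA a idp[OF i'] I01 unfolding Jp_def ideal2_def A'_def by auto
        moreover have "m * a \<in> Jm i" using pm pA aA a idm[OF i'] I01 unfolding Jm_def ideal2_def A'_def by auto
        moreover have "a = p * a + m * a" using e pm by (simp add: distrib_right)
        ultimately show "a \<in> setsum (Jp i) (Jm i)" unfolding setsum_def by blast
      qed
    qed
  qed
  have I0J: "I0 Jp Jm i = I0 Ipl Imi (i+1) \<inter> I0 Ipl Imi 1" for i
    unfolding I0_def Jp_def Jm_def by auto
  have inter_eq: "(\<Inter>i\<in>{1..c}. I0 Jp Jm i) = (\<Inter>i\<in>{1..c+1}. I0 Ipl Imi i)" if "c \<ge> 1" for c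
  proof
    show "(\<Inter>i\<in>{1..c}. I0 Jp Jm i) \<subseteq> (\<Inter>i\<in>{1..c+1}. I0 Ipl Imi i)"
    proof
      fix x assume x: "x \<in> (\<Inter>i\<in>{1..c}. I0 Jp Jm i)"
      show "x \<in> (\<Inter>i\<in>{1..c+1}. I0 Ipl Imi i)"
      proof
        fix i assume i: "i \<in> {1..c+1}"
        show "x \<in> I0 Ipl Imi i"
        proof (cases "i = 1")
          case True then show ?thesis using x that unfolding I0J by auto
        next
          case False
          then have "i - 1 \<in> {1..c}" "i - 1 + 1 = i" using i by auto
          then show ?thesis using x unfolding I0J by (metis INT_E IntD1)
        qed
      qed
    qed
    show "(\<Inter>i\<in>{1..c+1}. I0 Ipl Imi i) \<subseteq> (\<Inter>i\<in>{1..c}. I0 Jp Jm i)"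
      unfolding I0J using that by auto
  qed
  have good': "good_cubical sc A' Jp Jm (n - 1)"
    unfolding good_cubical_def
  proof (intro conjI cub' ballI)
    fix c assume c: "c \<in> {1..n-1}"
    then have "c + 1 \<in> {1..n}" by auto
    then show "loc_biunital (\<Inter>i\<in>{1..c}. I0 Jp Jm i)" using loc inter_eq[of c] c by auto
  qed
  have tr: "Itr A' Jp Jm (n - 1) = Itr A Ipl Imi n"
  proof
    show "Itr A' Jp Jm (n - 1) \<subseteq> Itr A Ipl Imi n"
    proof
      fix x assume x: "x \<in> Itr A' Jp Jm (n - 1)"
      have xA': "x \<in> A'" using x unfolding Itr_def by auto
      show "x \<in> Itr A Ipl Imi n" unfolding Itr_def
      proof (intro IntI INT_I)
        show "x \<in> A" using xA' A'sub by auto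
        fix i assume i: "i \<in> {1..n}"
        show "x \<in> I0 Ipl Imi i"
        proof (cases "i = 1")
          case True then show ?thesis using xA' A'_def by auto
        next
          case False
          then have "i - 1 \<in> {1..n-1}" "i - 1 + 1 = i" using i by auto
          then show ?thesis using x unfolding Itr_def I0J by (metis INT_E IntD1 IntD2)
        qed
      qed
    qed
    show "Itr A Ipl Imi n \<subseteq> Itr A' Jp Jm (n - 1)"
      unfolding Itr_def I0J A'_def using i1 by auto
  qed
  define T where "T = Itr A Ipl Imi n"
  have TA: "T \<subseteq> A" unfolding T_def Itr_def by auto
  have Tn: "T = (\<Inter>i\<in>{1..n}. I0 Ipl Imi i)"
    unfolding T_def Itr_def using I01 i1 unfolding ideal2_def by auto
  have TmulR: "t * a \<in> T" if "t \<in> T" "a \<in> A" for t a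
    using that I0i unfolding Tn ideal2_def by blast
  have TmulL: "a * t \<in> T" if "t \<in> T" "a \<in> A" for t a
    using that I0i unfolding Tn ideal2_def by blast
  have ru: "loc_right_unital T" using loc[of n] n1 unfolding Tn loc_biunital_def by auto
  have gen: "t * a - a * t \<in> comm_span sc T T" if t: "t \<in> T" and a: "a \<in> A" for t a
  proof -
    obtain f where f: "f \<in> T" "t * f = t" using ru t unfolding loc_right_unital_def
      by (metis empty_subsetI finite.emptyI finite.insertI insert_iff insert_subset)
    have fA: "f \<in> A" using f TA by auto
    have fa: "f * a \<in> T" using TmulR f a by auto
    have at: "a * t \<in> T" using TmulL t a by auto
    have e1: "t * (f * a) - (f * a) * t \<in> comm_span sc T T"
      unfolding comm_span_def using t fa by (intro M.span_base) blast
    have e2: "(a * t) * f - f * (a * t) \<in> comm_span sc T T"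
      unfolding comm_span_def using at f by (intro M.span_base) blast
    have d: "(t * (f * a) - (f * a) * t) - ((a * t) * f - f * (a * t)) \<in> comm_span sc T T"
      using e1 e2 unfolding comm_span_def by (rule M.span_diff)
    have q1: "t * (f * a) = t * a" using f by (metis mult.assoc)
    have q2: "(a * t) * f = a * t" using f by (metis mult.assoc)
    have q3: "(f * a) * t = f * (a * t)" by (rule mult.assoc)
    have "(t * (f * a) - (f * a) * t) - ((a * t) * f - f * (a * t)) = t * a - a * t"
      unfolding q1 q2 q3 by simp
    then show ?thesis using d by simp
  qed
  have Neq: "comm_span sc T A = comm_span sc T T"
  proof
    show "comm_span sc T A \<subseteq> comm_span sc T T"
      unfolding comm_span_def[of sc T A]
      apply (rule M.span_minimal)
      using gen apply blast
      unfolding comm_span_def by simp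
    show "comm_span sc T T \<subseteq> comm_span sc T A"
      unfolding comm_span_def using TA by (intro M.span_mono) blast
  qed
  have Nsub: "M.subspace (comm_span sc T T)" unfolding comm_span_def by simp
  have bij: "bij_betw (nat_map (comm_span sc T A)) (quot T (comm_span sc T T)) (quot T (comm_span sc T A))"
    unfolding Neq
    apply (rule bij_betw_cong[where f=id, THEN iffD1, rotated])
     apply simp
    unfolding nat_map_def using setsum_coset_self[OF Mod Nsub] by simp
  show ?thesis using good' tr bij unfolding T_def by blast
qed

end
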